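(* Let $p$ be a state. The interior of $p^{TP}=\{Tp:T\in TP(d)\}$, taken relative to the affine hyperplane $\{x\in\mathbb{R}^d:\sum_i x_i=1\}$, consists exactly of the states $r$ such that every elbow $(x,y)$ of $\beta(r)$ lies strictly below $\beta(p)$, i.e. $y<\beta(p)(x)$.
   Context: Fix $d\ge 2$, $\beta\in(0,\infty)$ and pairwise distinct reals $E_0=0,E_1,\dots,E_{d-1}$. Put $q_{m,n}=e^{-\beta(E_m-E_n)}$, $Z=\sum_j q_{j,0}$, $g_i=q_{i,0}/Z$. A state is a probability vector in $\mathbb{R}^d$. $TP(d)$ is the set of $d\times d$ real matrices with non-negative entries, columns summing to $1$, and $Tg=g$. For a state $p$ choose a permutation $\pi$ of $\{0,\dots,d-1\}$ with $p_{\pi(0)}/g_{\pi(0)}\ge\dots\ge p_{\pi(d-1)}/g_{\pi(d-1)}$; let $x_k=\sum_{i\le k}g_{\pi(i)}$, $y_k=\sum_{i\le k}p_{\pi(i)}$. The thermomajorization curve $\beta(p)$ is the graph of the concave piecewise-linear function $\beta(p)(\cdot)$ on $[0,1]$ through $(0,0),(x_0,y_0),\dots,(x_{d-1},y_{d-1})=(1,1)$. The elbows of $\beta(p)$ are the points $(x_k,y_k)$ for $k=0,\dots,d-2$. *)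

theory Defs
  imports "HOL-Analysis.Analysis"
begin

definition gibbs :: "real \<Rightarrow> ('n::finite \<Rightarrow> real) \<Rightarrow> real^'n" where
  "gibbs beta E = (\<chi> i. exp (- beta * E i) / (\<Sum>j\<in>UNIV. exp (- beta * E j)))"

definition is_state :: "real^'n::finite \<Rightarrow> bool" where
  "is_state p \<longleftrightarrow> (\<forall>i. 0 \<le> p $ i) \<and> (\<Sum>i\<in>UNIV. p $ i) = 1"

definition TP :: "real^'n::finite \<Rightarrow> (real^'n^'n) set" where
  "TP g = {T. (\<forall>i j. 0 \<le> T $ i $ j) \<and> (\<forall>j. (\<Sum>i\<in>UNIV. T $ i $ j) = 1) \<and> T *v g = g}"

definition TP_orbit :: "real^'n::finite \<Rightarrow> real^'n \<Rightarrow> (real^'n) set" where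
  "TP_orbit g p = {T *v p | T. T \<in> TP g}"

definition hyperplane1 :: "(real^'n::finite) set" where
  "hyperplane1 = {x. (\<Sum>i\<in>UNIV. x $ i) = 1}"

definition tm_order :: "real^'n::finite \<Rightarrow> real^'n \<Rightarrow> (nat \<Rightarrow> 'n) \<Rightarrow> bool" where
  "tm_order g p \<pi> \<longleftrightarrow> bij_betw \<pi> {..<CARD('n)} UNIV \<and>
     (\<forall>i j. i \<le> j \<and> j < CARD('n) \<longrightarrow> p $ (\<pi> j) / g $ (\<pi> j) \<le> p $ (\<pi> i) / g $ (\<pi> i))"

definition tm_perm :: "real^'n::finite \<Rightarrow> real^'n \<Rightarrow> (nat \<Rightarrow> 'n)" where
  "tm_perm g p = (SOME \<pi>. tm_order g p \<pi>)"

text \<open>X k = x_{k-1}, Y k = y_{k-1}, with X 0 = Y 0 = 0 (the point (0,0)).\<close>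
definition tmX :: "real^'n::finite \<Rightarrow> real^'n \<Rightarrow> nat \<Rightarrow> real" where
  "tmX g p k = (\<Sum>i<k. g $ (tm_perm g p i))"

definition tmY :: "real^'n::finite \<Rightarrow> real^'n \<Rightarrow> nat \<Rightarrow> real" where
  "tmY g p k = (\<Sum>i<k. p $ (tm_perm g p i))"

text \<open>The piecewise-linear function beta(p)(t) on [0,1] through (0,0),(x_0,y_0),...,(x_{d-1},y_{d-1}).\<close>
definition tm_curve :: "real^'n::finite \<Rightarrow> real^'n \<Rightarrow> real \<Rightarrow> real" where
  "tm_curve g p t =
     (let k = (LEAST k. t \<le> tmX g p (Suc k))
      in tmY g p k + (t - tmX g p k) * (tmY g p (Suc k) - tmY g p k) / (tmX g p (Suc k) - tmX g p k))"

definition elbows :: "real^'n::finite \<Rightarrow> real^'n \<Rightarrow> (real \<times> real) set" where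
  "elbows g p = {(tmX g p (Suc k), tmY g p (Suc k)) | k. k \<le> CARD('n) - 2}"

end

theory Submission
  imports Defs
begin

lemma sort_exists:
  fixes f :: "'n::finite \<Rightarrow> real"
  shows "\<exists>\<sigma>. bij_betw \<sigma> {..<CARD('n)} UNIV \<and> (\<forall>i j. i \<le> j \<and> j < CARD('n) \<longrightarrow> f (\<sigma> j) \<le> f (\<sigma> i))"
proof -
  obtain xs :: "'n list" where xs: "set xs = UNIV" "distinct xs"
    using finite_distinct_list[OF finite[of "UNIV :: 'n set"]] by blast
  define ys where "ys = sort_key (\<lambda>i. - f i) xs"
  have ys1: "set ys = UNIV" "distinct ys" using xs by (simp_all add: ys_def)
  have ys: "set ys = UNIV" "distinct ys" "length ys = CARD('n)"
    using ys1 distinct_card[OF ys1(2)] by simp_all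
  have s: "sorted (map (\<lambda>i. - f i) ys)" by (simp add: ys_def)
  show ?thesis
  proof (intro exI conjI allI impI)
    show "bij_betw ((!) ys) {..<CARD('n)} UNIV" using ys by (intro bij_betw_nth) auto
    fix i j assume ij: "i \<le> j \<and> j < CARD('n)"
    then have "(map (\<lambda>i. - f i) ys) ! i \<le> (map (\<lambda>i. - f i) ys) ! j"
      using s ys by (intro sorted_nth_mono) auto
    then show "f (ys ! j) \<le> f (ys ! i)" using ys ij by simp
  qed
qed

definition PS :: "(nat \<Rightarrow> 'n) \<Rightarrow> ('n \<Rightarrow> real) \<Rightarrow> nat \<Rightarrow> real" where
  "PS \<sigma> f k = (\<Sum>i<k. f (\<sigma> i))"

definition pos :: "(nat \<Rightarrow> 'n::finite) \<Rightarrow> 'n \<Rightarrow> nat" where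
  "pos \<sigma> j = inv_into {..<CARD('n)} \<sigma> j"

lemma PS_0[simp]: "PS \<sigma> f 0 = 0" by (simp add: PS_def)
lemma PS_Suc: "PS \<sigma> f (Suc k) = PS \<sigma> f k + f (\<sigma> k)" by (simp add: PS_def)

lemma PS_all:
  fixes \<sigma> :: "nat \<Rightarrow> 'n::finite"
  assumes "bij_betw \<sigma> {..<CARD('n)} UNIV"
  shows "PS \<sigma> f CARD('n) = sum f UNIV"
  unfolding PS_def using sum.reindex_bij_betw[OF assms, of f] by simp

lemma sum_reindex_pos:
  fixes \<sigma> :: "nat \<Rightarrow> 'n::finite"
  assumes "bij_betw \<sigma> {..<CARD('n)} UNIV"
  shows "(\<Sum>i\<in>UNIV. f i) = (\<Sum>k<CARD('n). f (\<sigma> k))"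
  using sum.reindex_bij_betw[OF assms, of f] by simp

lemma pos_facts:
  fixes \<sigma> :: "nat \<Rightarrow> 'n::finite"
  assumes "bij_betw \<sigma> {..<CARD('n)} UNIV"
  shows "pos \<sigma> j < CARD('n)" "\<sigma> (pos \<sigma> j) = j" "k < CARD('n) \<Longrightarrow> pos \<sigma> (\<sigma> k) = k"
proof -
  show "pos \<sigma> j < CARD('n)" unfolding pos_def
    using assms by (metis UNIV_I bij_betw_def inv_into_into lessThan_iff)
  show "\<sigma> (pos \<sigma> j) = j" unfolding pos_def
    using assms by (metis UNIV_I bij_betw_def f_inv_into_f)
  show "k < CARD('n) \<Longrightarrow> pos \<sigma> (\<sigma> k) = k" unfolding pos_def
    using assms by (metis bij_betw_def inv_into_f_f lessThan_iff)
qed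

lemma sum_pos_reindex:
  fixes \<sigma> :: "nat \<Rightarrow> 'n::finite"
  assumes "bij_betw \<sigma> {..<CARD('n)} UNIV"
  shows "(\<Sum>i\<in>UNIV. f (pos \<sigma> i)) = (\<Sum>k<CARD('n). f k)"
  using sum_reindex_pos[OF assms, of "\<lambda>i. f (pos \<sigma> i)"] pos_facts[OF assms] by simp


locale gs =
  fixes g :: "real^'n::finite"
  assumes gpos: "\<And>i. 0 < g$i" and gsum: "(\<Sum>i\<in>UNIV. g$i) = 1"
begin

abbreviation G :: "(nat \<Rightarrow> 'n) \<Rightarrow> nat \<Rightarrow> real" where "G \<sigma> k \<equiv> PS \<sigma> (($) g) k"

definition F :: "real^'n \<Rightarrow> real \<Rightarrow> real" where
  "F q t = (\<Sum>i\<in>UNIV. max 0 (q$i - t * g$i))"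

definition hh :: "(nat \<Rightarrow> 'n) \<Rightarrow> 'n \<Rightarrow> real \<Rightarrow> real" where
  "hh \<pi> j x = min (max x (G \<pi> (pos \<pi> j))) (G \<pi> (Suc (pos \<pi> j))) - G \<pi> (pos \<pi> j)"

lemma G_mono: "k \<le> m \<Longrightarrow> G \<pi> k \<le> G \<pi> m"
  unfolding PS_def by (rule sum_mono2) (auto intro: less_imp_le[OF gpos])

lemma G_nonneg: "0 \<le> G \<pi> k"
  using G_mono[of 0 k \<pi>] by simp

lemma G_all: "bij_betw \<pi> {..<CARD('n)} UNIV \<Longrightarrow> G \<pi> CARD('n) = 1"
  using PS_all gsum by metis

lemma G_le1: "bij_betw \<pi> {..<CARD('n)} UNIV \<Longrightarrow> k \<le> CARD('n) \<Longrightarrow> G \<pi> k \<le> 1"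
  using G_mono G_all by metis

lemma find_k:
  assumes bij: "bij_betw \<pi> {..<CARD('n)} UNIV" and x: "0 \<le> x" "x \<le> 1"
  shows "(LEAST k. x \<le> G \<pi> (Suc k)) < CARD('n) \<and> G \<pi> (LEAST k. x \<le> G \<pi> (Suc k)) \<le> x
         \<and> x \<le> G \<pi> (Suc (LEAST k. x \<le> G \<pi> (Suc k)))"
proof -
  define k where "k = (LEAST k. x \<le> G \<pi> (Suc k))"
  have c: "Suc (CARD('n) - 1) = CARD('n)" by simp
  have ex: "x \<le> G \<pi> (Suc (CARD('n) - 1))" using c G_all[OF bij] x by simp
  have k1: "x \<le> G \<pi> (Suc k)" unfolding k_def by (rule LeastI[of "\<lambda>k. x \<le> G \<pi> (Suc k)", OF ex])
  have k2: "k \<le> CARD('n) - 1" unfolding k_def by (rule Least_le[of "\<lambda>k. x \<le> G \<pi> (Suc k)", OF ex])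
  have k3: "G \<pi> k \<le> x"
  proof (cases k)
    case 0 then show ?thesis using x by simp
  next
    case (Suc k')
    then have "\<not> x \<le> G \<pi> (Suc k')" using not_less_Least[of k' "\<lambda>k. x \<le> G \<pi> (Suc k)"] unfolding k_def by simp
    then show ?thesis using Suc by simp
  qed
  have "0 < CARD('n)" by simp
  show ?thesis using k1 k2 k3 \<open>0 < CARD('n)\<close> unfolding k_def[symmetric] by linarith
qed

lemma W:
  assumes bij: "bij_betw \<pi> {..<CARD('n)} UNIV" and k: "k < CARD('n)" "G \<pi> k \<le> x" "x \<le> G \<pi> (Suc k)"
  shows "(\<Sum>j\<in>UNIV. v j * hh \<pi> j x) = (\<Sum>i<k. v (\<pi> i) * g$(\<pi> i)) + v (\<pi> k) * (x - G \<pi> k)"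
proof -
  have "(\<Sum>j\<in>UNIV. v j * hh \<pi> j x) = (\<Sum>m<CARD('n). v (\<pi> m) * hh \<pi> (\<pi> m) x)"
    by (rule sum_reindex_pos[OF bij])
  also have "\<dots> = (\<Sum>m<CARD('n). (if m < k then v (\<pi> m) * g$(\<pi> m) else if m = k then v (\<pi> k) * (x - G \<pi> k) else 0))"
  proof (rule sum.cong[OF refl])
    fix m assume m: "m \<in> {..<CARD('n)}"
    then have pm: "pos \<pi> (\<pi> m) = m" using pos_facts[OF bij] by simp
    show "v (\<pi> m) * hh \<pi> (\<pi> m) x = (if m < k then v (\<pi> m) * g$(\<pi> m) else if m = k then v (\<pi> k) * (x - G \<pi> k) else 0)"
    proof (cases "m < k")
      case True
      then have "G \<pi> (Suc m) \<le> G \<pi> k" by (intro G_mono) simp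
      moreover have "G \<pi> m \<le> G \<pi> (Suc m)" by (intro G_mono) simp
      ultimately show ?thesis using True k pm by (simp add: hh_def PS_Suc)
    next
      case False
      show ?thesis
      proof (cases "m = k")
        case True
        then show ?thesis using k pm by (simp add: hh_def)
      next
        case False
        then have "G \<pi> (Suc k) \<le> G \<pi> m" using \<open>\<not> m < k\<close> by (intro G_mono) simp
        moreover have "G \<pi> m \<le> G \<pi> (Suc m)" by (intro G_mono) simp
        ultimately show ?thesis using False \<open>\<not> m < k\<close> k pm by (simp add: hh_def)
      qed
    qed
  qed
  also have "\<dots> = (\<Sum>m<Suc k. (if m < k then v (\<pi> m) * g$(\<pi> m) else if m = k then v (\<pi> k) * (x - G \<pi> k) else 0))"
    by (rule sum.mono_neutral_right) (use k in auto)
  also have "\<dots> = (\<Sum>i<k. v (\<pi> i) * g$(\<pi> i)) + v (\<pi> k) * (x - G \<pi> k)"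
    by simp
  finally show ?thesis .
qed

lemma hh_bounds:
  assumes bij: "bij_betw \<pi> {..<CARD('n)} UNIV"
  shows "0 \<le> hh \<pi> j x" "hh \<pi> j x \<le> g$j"
proof -
  have "G \<pi> (pos \<pi> j) \<le> G \<pi> (Suc (pos \<pi> j))" by (intro G_mono) simp
  moreover have "G \<pi> (Suc (pos \<pi> j)) = G \<pi> (pos \<pi> j) + g$j"
    using pos_facts(2)[OF bij] by (simp add: PS_Suc)
  ultimately show "0 \<le> hh \<pi> j x" "hh \<pi> j x \<le> g$j" unfolding hh_def by auto
qed

lemma hh_mono: "x \<le> y \<Longrightarrow> hh \<pi> j x \<le> hh \<pi> j y"
  unfolding hh_def by auto

lemma hh_0: "hh \<pi> j 0 = 0"
  using G_nonneg[of \<pi> "pos \<pi> j"] G_mono[of "pos \<pi> j" "Suc (pos \<pi> j)" \<pi>] unfolding hh_def by simp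

lemma hh_1:
  assumes bij: "bij_betw \<pi> {..<CARD('n)} UNIV"
  shows "hh \<pi> j 1 = g$j"
proof -
  have "G \<pi> (Suc (pos \<pi> j)) = G \<pi> (pos \<pi> j) + g$j"
    using pos_facts(2)[OF bij] by (simp add: PS_Suc)
  moreover have "G \<pi> (Suc (pos \<pi> j)) \<le> 1" using G_le1[OF bij, of "Suc (pos \<pi> j)"] pos_facts(1)[OF bij, of j] by simp
  moreover have "0 < g$j" by (rule gpos)
  ultimately show ?thesis unfolding hh_def by auto
qed

lemma hh_sum:
  assumes bij: "bij_betw \<pi> {..<CARD('n)} UNIV" and x: "0 \<le> x" "x \<le> 1"
  shows "(\<Sum>j\<in>UNIV. hh \<pi> j x) = x"
proof -
  define k where "k = (LEAST k. x \<le> G \<pi> (Suc k))"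
  have k: "k < CARD('n)" "G \<pi> k \<le> x" "x \<le> G \<pi> (Suc k)" using find_k[OF bij x] unfolding k_def by auto
  have "(\<Sum>j\<in>UNIV. 1 * hh \<pi> j x) = (\<Sum>i<k. 1 * g$(\<pi> i)) + 1 * (x - G \<pi> k)"
    by (rule W[OF bij k])
  then show ?thesis by (simp add: PS_def)
qed

lemma F_nonneg: "0 \<le> F q t"
  unfolding F_def by (rule sum_nonneg) simp

lemma F_ge: "(\<Sum>i\<in>UNIV. q$i) = 1 \<Longrightarrow> 1 - t \<le> F q t"
proof -
  assume q: "(\<Sum>i\<in>UNIV. q$i) = 1"
  have "1 - t = (\<Sum>i\<in>UNIV. q$i - t * g$i)"
    using q gsum by (simp add: sum_subtractf sum_distrib_left[symmetric])
  also have "\<dots> \<le> F q t" unfolding F_def by (rule sum_mono) simp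
  finally show ?thesis .
qed

lemma knap:
  assumes bij: "bij_betw \<sigma> {..<CARD('n)} UNIV" and k: "k \<le> CARD('n)"
  shows "PS \<sigma> (($) q) k - t * G \<sigma> k \<le> F q t"
proof -
  have "PS \<sigma> (($) q) k - t * G \<sigma> k = (\<Sum>i<k. q$(\<sigma> i) - t * g$(\<sigma> i))"
    by (simp add: PS_def sum_subtractf sum_distrib_left)
  also have "\<dots> \<le> (\<Sum>i<k. max 0 (q$(\<sigma> i) - t * g$(\<sigma> i)))" by (rule sum_mono) simp
  also have "\<dots> \<le> (\<Sum>i<CARD('n). max 0 (q$(\<sigma> i) - t * g$(\<sigma> i)))"
    by (rule sum_mono2) (use k in auto)
  also have "\<dots> = F q t" unfolding F_def by (rule sum_reindex_pos[OF bij, symmetric])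
  finally show ?thesis .
qed

lemma prefix:
  assumes bij: "bij_betw \<pi> {..<CARD('n)} UNIV" and k: "k \<le> CARD('n)"
    and hi: "\<And>i. i < k \<Longrightarrow> t \<le> q$(\<pi> i) / g$(\<pi> i)"
    and lo: "\<And>i. k \<le> i \<Longrightarrow> i < CARD('n) \<Longrightarrow> q$(\<pi> i) / g$(\<pi> i) \<le> t"
  shows "F q t = PS \<pi> (($) q) k - t * G \<pi> k"
proof -
  have "F q t = (\<Sum>m<CARD('n). max 0 (q$(\<pi> m) - t * g$(\<pi> m)))"
    unfolding F_def by (rule sum_reindex_pos[OF bij])
  also have "\<dots> = (\<Sum>m<CARD('n). if m < k then q$(\<pi> m) - t * g$(\<pi> m) else 0)"
  proof (rule sum.cong[OF refl])
    fix m assume m: "m \<in> {..<CARD('n)}"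
    have gp: "0 < g$(\<pi> m)" by (rule gpos)
    show "max 0 (q$(\<pi> m) - t * g$(\<pi> m)) = (if m < k then q$(\<pi> m) - t * g$(\<pi> m) else 0)"
    proof (cases "m < k")
      case True
      then have "t * g$(\<pi> m) \<le> q$(\<pi> m)" using hi[OF True] gp by (simp add: le_divide_eq)
      then show ?thesis using True by simp
    next
      case False
      then have "q$(\<pi> m) \<le> t * g$(\<pi> m)" using lo[of m] m gp by (simp add: divide_le_eq)
      then show ?thesis using False by simp
    qed
  qed
  also have "\<dots> = (\<Sum>m<k. if m < k then q$(\<pi> m) - t * g$(\<pi> m) else 0)"
    by (rule sum.mono_neutral_right) (use k in auto)
  also have "\<dots> = PS \<pi> (($) q) k - t * G \<pi> k"
    by (simp add: PS_def sum_subtractf sum_distrib_left)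
  finally show ?thesis .
qed

lemma F_cont: "continuous_on S (F q)"
  unfolding F_def by (intro continuous_intros)

lemma F_lip: "F q t \<le> F r t + (\<Sum>i\<in>UNIV. \<bar>q$i - r$i\<bar>)"
proof -
  have "F q t \<le> (\<Sum>i\<in>UNIV. max 0 (r$i - t * g$i) + \<bar>q$i - r$i\<bar>)"
    unfolding F_def by (rule sum_mono) auto
  then show ?thesis by (simp add: F_def sum.distrib)
qed

end


lemma abel_ident:
  fixes a D :: "nat \<Rightarrow> real"
  shows "(\<Sum>k<n. a k * (D (Suc k) - D k)) = (\<Sum>k<n. (a k - a (Suc k)) * D (Suc k)) + a n * D n - a 0 * D 0"
  by (induction n) (simp_all add: algebra_simps)

lemma abel_nonneg:
  fixes a D :: "nat \<Rightarrow> real"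
  assumes mono: "\<And>k. Suc k < n \<Longrightarrow> a (Suc k) \<le> a k" and D: "\<And>k. k \<le> n \<Longrightarrow> 0 \<le> D k"
    and D0: "D 0 = 0" and Dn: "D n = 0"
  shows "0 \<le> (\<Sum>k<n. a k * (D (Suc k) - D k))"
proof -
  have "0 \<le> (\<Sum>k<n. (a k - a (Suc k)) * D (Suc k))"
  proof (rule sum_nonneg)
    fix k assume k: "k \<in> {..<n}"
    show "0 \<le> (a k - a (Suc k)) * D (Suc k)"
    proof (cases "Suc k = n")
      case True then show ?thesis using Dn by simp
    next
      case False then have "Suc k < n" using k by simp
      then show ?thesis using mono[of k] D[of "Suc k"] by simp
    qed
  qed
  then show ?thesis using abel_ident[of a D n] D0 Dn by simp
qed

context gs
begin

lemma perm_ok: "tm_order g p (tm_perm g p)"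
proof -
  have "\<exists>\<pi>. tm_order g p \<pi>" using sort_exists[of "\<lambda>i. p$i / g$i"] unfolding tm_order_def by simp
  then show ?thesis unfolding tm_perm_def by (rule someI_ex)
qed

lemma perm_bij: "bij_betw (tm_perm g p) {..<CARD('n)} UNIV"
  using perm_ok unfolding tm_order_def by blast

lemma perm_sorted: "i \<le> j \<Longrightarrow> j < CARD('n) \<Longrightarrow>
   p$(tm_perm g p j) / g$(tm_perm g p j) \<le> p$(tm_perm g p i) / g$(tm_perm g p i)"
  using perm_ok unfolding tm_order_def by blast

lemma tmX_eq: "tmX g p k = G (tm_perm g p) k" by (simp add: tmX_def PS_def)
lemma tmY_eq: "tmY g p k = PS (tm_perm g p) (($) p) k" by (simp add: tmY_def PS_def)

definition lor :: "real^'n \<Rightarrow> real \<Rightarrow> real" where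
  "lor p x = (\<Sum>j\<in>UNIV. (p$j / g$j) * hh (tm_perm g p) j x)"

lemma lor_formula:
  assumes x: "0 \<le> x" "x \<le> 1"
  shows "(LEAST k. x \<le> G (tm_perm g p) (Suc k)) < CARD('n)
    \<and> G (tm_perm g p) (LEAST k. x \<le> G (tm_perm g p) (Suc k)) \<le> x
    \<and> x \<le> G (tm_perm g p) (Suc (LEAST k. x \<le> G (tm_perm g p) (Suc k)))
    \<and> lor p x = PS (tm_perm g p) (($) p) (LEAST k. x \<le> G (tm_perm g p) (Suc k))
       + p$(tm_perm g p (LEAST k. x \<le> G (tm_perm g p) (Suc k))) / g$(tm_perm g p (LEAST k. x \<le> G (tm_perm g p) (Suc k)))
         * (x - G (tm_perm g p) (LEAST k. x \<le> G (tm_perm g p) (Suc k)))"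
proof -
  define \<pi> where "\<pi> = tm_perm g p"
  define k where "k = (LEAST k. x \<le> G \<pi> (Suc k))"
  have bij: "bij_betw \<pi> {..<CARD('n)} UNIV" unfolding \<pi>_def by (rule perm_bij)
  have k: "k < CARD('n)" "G \<pi> k \<le> x" "x \<le> G \<pi> (Suc k)" using find_k[OF bij x] unfolding k_def by auto
  have "lor p x = (\<Sum>i<k. p$(\<pi> i) / g$(\<pi> i) * g$(\<pi> i)) + p$(\<pi> k) / g$(\<pi> k) * (x - G \<pi> k)"
    unfolding lor_def \<pi>_def[symmetric] by (rule W[OF bij k])
  also have "(\<Sum>i<k. p$(\<pi> i) / g$(\<pi> i) * g$(\<pi> i)) = PS \<pi> (($) p) k"
    unfolding PS_def by (rule sum.cong[OF refl]) (use gpos in \<open>simp add: less_imp_neq[symmetric]\<close>)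
  finally show ?thesis using k unfolding k_def \<pi>_def by simp
qed

lemma curve_eq:
  assumes x: "0 \<le> x" "x \<le> 1"
  shows "tm_curve g p x = lor p x"
proof -
  define \<pi> where "\<pi> = tm_perm g p"
  define k where "k = (LEAST k. x \<le> G \<pi> (Suc k))"
  have lx: "lor p x = PS \<pi> (($) p) k + p$(\<pi> k) / g$(\<pi> k) * (x - G \<pi> k)"
    using lor_formula[OF x, of p] unfolding k_def \<pi>_def by auto
  have gp: "g$(\<pi> k) \<noteq> 0" using gpos[THEN less_imp_neq] by metis
  have "tm_curve g p x = PS \<pi> (($) p) k + (x - G \<pi> k) * (PS \<pi> (($) p) (Suc k) - PS \<pi> (($) p) k) / (G \<pi> (Suc k) - G \<pi> k)"
    unfolding tm_curve_def Let_def tmX_eq tmY_eq \<pi>_def[symmetric] k_def[symmetric] by simp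
  also have "\<dots> = PS \<pi> (($) p) k + p$(\<pi> k) / g$(\<pi> k) * (x - G \<pi> k)"
    by (simp add: PS_Suc)
  finally show ?thesis using lx by simp
qed

lemma lor_le_F:
  assumes x: "0 \<le> x" "x \<le> 1"
  shows "lor p x - t * x \<le> F p t"
proof -
  define \<pi> where "\<pi> = tm_perm g p"
  have bij: "bij_betw \<pi> {..<CARD('n)} UNIV" unfolding \<pi>_def by (rule perm_bij)
  have tx: "t * x = (\<Sum>j\<in>UNIV. t * hh \<pi> j x)"
    using hh_sum[OF bij x] by (metis sum_distrib_left)
  have "lor p x - t * x = (\<Sum>j\<in>UNIV. (p$j / g$j - t) * hh \<pi> j x)"
    unfolding lor_def \<pi>_def[symmetric] tx
    by (simp add: sum_subtractf[symmetric] algebra_simps)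
  also have "\<dots> \<le> F p t" unfolding F_def
  proof (rule sum_mono)
    fix j
    have h: "0 \<le> hh \<pi> j x" "hh \<pi> j x \<le> g$j" using hh_bounds[OF bij] by auto
    have gp: "0 < g$j" by (rule gpos)
    have e: "(p$j / g$j - t) * g$j = p$j - t * g$j" using gp by (simp add: field_simps)
    show "(p$j / g$j - t) * hh \<pi> j x \<le> max 0 (p$j - t * g$j)"
    proof (cases "0 \<le> p$j / g$j - t")
      case True
      then have "(p$j / g$j - t) * hh \<pi> j x \<le> (p$j / g$j - t) * g$j" using h by (intro mult_left_mono) auto
      then show ?thesis using e by simp
    next
      case False
      then have "(p$j / g$j - t) * hh \<pi> j x \<le> 0" using h by (intro mult_nonpos_nonneg) auto
      then show ?thesis by simp
    qed
  qed
  finally show ?thesis .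
qed

lemma lor_eq_F:
  assumes x: "0 \<le> x" "x \<le> 1"
  shows "\<exists>t. lor p x = F p t + t * x"
proof -
  define \<pi> where "\<pi> = tm_perm g p"
  define k where "k = (LEAST k. x \<le> G \<pi> (Suc k))"
  have bij: "bij_betw \<pi> {..<CARD('n)} UNIV" unfolding \<pi>_def by (rule perm_bij)
  have k: "k < CARD('n)" and lx: "lor p x = PS \<pi> (($) p) k + p$(\<pi> k) / g$(\<pi> k) * (x - G \<pi> k)"
    using lor_formula[OF x, of p] unfolding k_def \<pi>_def by auto
  define t where "t = p$(\<pi> k) / g$(\<pi> k)"
  have "F p t = PS \<pi> (($) p) k - t * G \<pi> k"
  proof (rule prefix[OF bij])
    show "k \<le> CARD('n)" using k by simp
    fix i
    show "i < k \<Longrightarrow> t \<le> p $ \<pi> i / g $ \<pi> i" unfolding t_def \<pi>_def using perm_sorted[of i k p] k by simp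
    show "k \<le> i \<Longrightarrow> i < CARD('n) \<Longrightarrow> p $ \<pi> i / g $ \<pi> i \<le> t" unfolding t_def \<pi>_def using perm_sorted[of k i p] by simp
  qed
  moreover have "lor p x = PS \<pi> (($) p) k + t * (x - G \<pi> k)" using lx unfolding t_def by simp
  ultimately have "lor p x = F p t + t * x" by (simp add: algebra_simps)
  then show ?thesis by blast
qed

lemma lor_0: "lor p 0 = 0" unfolding lor_def by (simp add: hh_0)

lemma lor_1: "lor p 1 = (\<Sum>j\<in>UNIV. p$j)"
  unfolding lor_def hh_1[OF perm_bij]
  by (rule sum.cong[OF refl]) (use gpos in \<open>simp add: less_imp_neq[symmetric]\<close>)

lemma lor_le_max:
  assumes x: "0 \<le> x" "x \<le> 1"
  shows "lor p x \<le> p$(tm_perm g p 0) / g$(tm_perm g p 0) * x"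
proof -
  define \<pi> where "\<pi> = tm_perm g p"
  have bij: "bij_betw \<pi> {..<CARD('n)} UNIV" unfolding \<pi>_def by (rule perm_bij)
  have "lor p x \<le> (\<Sum>j\<in>UNIV. p$(\<pi> 0) / g$(\<pi> 0) * hh \<pi> j x)"
    unfolding lor_def \<pi>_def[symmetric]
  proof (rule sum_mono)
    fix j
    have "p$(\<pi> (pos \<pi> j)) / g$(\<pi> (pos \<pi> j)) \<le> p$(\<pi> 0) / g$(\<pi> 0)"
      unfolding \<pi>_def using perm_sorted[of 0 "pos \<pi> j" p] pos_facts(1)[OF bij] \<pi>_def by simp
    then have "p$j / g$j \<le> p$(\<pi> 0) / g$(\<pi> 0)" using pos_facts(2)[OF bij] by simp
    then show "p$j / g$j * hh \<pi> j x \<le> p$(\<pi> 0) / g$(\<pi> 0) * hh \<pi> j x"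
      using hh_bounds[OF bij] by (intro mult_right_mono) auto
  qed
  also have "\<dots> = p$(\<pi> 0) / g$(\<pi> 0) * x" by (subst sum_distrib_left[symmetric]) (simp add: hh_sum[OF bij x])
  finally show ?thesis unfolding \<pi>_def .
qed

lemma lor_ge_min:
  assumes x: "0 \<le> x" "x \<le> 1" and ps: "(\<Sum>j\<in>UNIV. p$j) = 1"
  shows "p$(tm_perm g p (CARD('n) - 1)) / g$(tm_perm g p (CARD('n) - 1)) * (1 - x) \<le> 1 - lor p x"
proof -
  define \<pi> where "\<pi> = tm_perm g p"
  define m where "m = p$(\<pi> (CARD('n) - 1)) / g$(\<pi> (CARD('n) - 1))"
  have bij: "bij_betw \<pi> {..<CARD('n)} UNIV" unfolding \<pi>_def by (rule perm_bij)
  have "1 - lor p x = lor p 1 - lor p x" using lor_1 ps by simp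
  also have "\<dots> = (\<Sum>j\<in>UNIV. p$j / g$j * (g$j - hh \<pi> j x))"
    unfolding lor_def \<pi>_def[symmetric] hh_1[OF bij] by (simp add: sum_subtractf algebra_simps)
  also have "\<dots> \<ge> (\<Sum>j\<in>UNIV. m * (g$j - hh \<pi> j x))"
  proof (rule sum_mono)
    fix j
    have "CARD('n) - 1 < CARD('n)" by simp
    moreover have "pos \<pi> j \<le> CARD('n) - 1" using pos_facts(1)[OF bij, of j] by linarith
    ultimately have "m \<le> p$(\<pi> (pos \<pi> j)) / g$(\<pi> (pos \<pi> j))"
      unfolding m_def using perm_sorted[of "pos \<pi> j" "CARD('n) - 1" p] unfolding \<pi>_def by blast
    then have "m \<le> p$j / g$j" using pos_facts(2)[OF bij] by simp
    then show "m * (g$j - hh \<pi> j x) \<le> p$j / g$j * (g$j - hh \<pi> j x)"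
      using hh_bounds[OF bij] by (intro mult_right_mono) auto
  qed
  also have "(\<Sum>j\<in>UNIV. m * (g$j - hh \<pi> j x)) = m * (1 - x)"
    by (simp add: sum_distrib_left[symmetric] sum_subtractf hh_sum[OF bij x] gsum)
  finally show ?thesis unfolding m_def \<pi>_def .
qed

end


lemma mv_nth: "(T *v v) $ i = (\<Sum>j\<in>UNIV. T$i$j * v$j)" by (simp add: matrix_vector_mult_def)

context gs
begin

lemma orbit_state:
  assumes p: "is_state p" and T: "T \<in> TP g"
  shows "is_state (T *v p)"
proof -
  have T1: "\<forall>i j. 0 \<le> T$i$j" "\<forall>j. (\<Sum>i\<in>UNIV. T$i$j) = 1" using T unfolding TP_def by auto
  have "\<forall>i. 0 \<le> (T *v p)$i" using T1 p unfolding is_state_def mv_nth by (auto intro!: sum_nonneg)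
  moreover have "(\<Sum>i\<in>UNIV. (T *v p)$i) = 1"
  proof -
    have "(\<Sum>i\<in>UNIV. (T *v p)$i) = (\<Sum>j\<in>UNIV. \<Sum>i\<in>UNIV. T$i$j * p$j)"
      unfolding mv_nth by (rule sum.swap)
    also have "\<dots> = (\<Sum>j\<in>UNIV. (\<Sum>i\<in>UNIV. T$i$j) * p$j)" by (simp add: sum_distrib_right)
    finally show ?thesis using T1 p unfolding is_state_def by simp
  qed
  ultimately show ?thesis unfolding is_state_def by simp
qed

lemma F_orbit:
  assumes T: "T \<in> TP g" shows "F (T *v p) t \<le> F p t"
proof -
  have T1: "\<forall>i j. 0 \<le> T$i$j" "\<forall>j. (\<Sum>i\<in>UNIV. T$i$j) = 1" "T *v g = g" using T unfolding TP_def by auto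
  have e: "(T *v p)$i - t * g$i = (\<Sum>j\<in>UNIV. T$i$j * (p$j - t * g$j))" for i
  proof -
    have "g$i = (T *v g)$i" using T1(3) by simp
    then have "(T *v p)$i - t * g$i = (\<Sum>j\<in>UNIV. T$i$j * p$j) - t * (\<Sum>j\<in>UNIV. T$i$j * g$j)" by (simp add: mv_nth)
    then show ?thesis by (simp add: sum_subtractf sum_distrib_left algebra_simps)
  qed
  have "F (T *v p) t \<le> (\<Sum>i\<in>UNIV. \<Sum>j\<in>UNIV. T$i$j * max 0 (p$j - t * g$j))"
    unfolding F_def e
  proof (rule sum_mono)
    fix i
    have a: "(\<Sum>j\<in>UNIV. T$i$j * (p$j - t*g$j)) \<le> (\<Sum>j\<in>UNIV. T$i$j * max 0 (p$j - t*g$j))"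
      by (rule sum_mono) (use T1 in \<open>auto intro: mult_left_mono\<close>)
    have b: "0 \<le> (\<Sum>j\<in>UNIV. T$i$j * max 0 (p$j - t*g$j))" using T1 by (auto intro: sum_nonneg)
    show "max 0 (\<Sum>j\<in>UNIV. T$i$j * (p$j - t*g$j)) \<le> (\<Sum>j\<in>UNIV. T$i$j * max 0 (p$j - t*g$j))"
      using a b by simp
  qed
  also have "\<dots> = (\<Sum>j\<in>UNIV. \<Sum>i\<in>UNIV. T$i$j * max 0 (p$j - t*g$j))" by (rule sum.swap)
  also have "\<dots> = (\<Sum>j\<in>UNIV. (\<Sum>i\<in>UNIV. T$i$j) * max 0 (p$j - t*g$j))" by (simp add: sum_distrib_right)
  also have "\<dots> = F p t" using T1 by (simp add: F_def)
  finally show ?thesis .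
qed

lemma TP_mix:
  assumes A: "A \<in> TP g" and B: "B \<in> TP g" and u: "0 \<le> u" "0 \<le> v" "u + v = 1"
  shows "u *\<^sub>R A + v *\<^sub>R B \<in> TP g" "(u *\<^sub>R A + v *\<^sub>R B) *v x = u *\<^sub>R (A *v x) + v *\<^sub>R (B *v x)"
proof -
  show mv: "(u *\<^sub>R A + v *\<^sub>R B) *v x = u *\<^sub>R (A *v x) + v *\<^sub>R (B *v x)" for x
    by (simp add: vec_eq_iff mv_nth sum.distrib sum_distrib_left algebra_simps)
  have A1: "\<forall>i j. 0 \<le> A$i$j" "\<forall>j. (\<Sum>i\<in>UNIV. A$i$j) = 1" "A *v g = g" using A unfolding TP_def by auto
  have B1: "\<forall>i j. 0 \<le> B$i$j" "\<forall>j. (\<Sum>i\<in>UNIV. B$i$j) = 1" "B *v g = g" using B unfolding TP_def by auto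
  have "\<forall>i j. 0 \<le> (u *\<^sub>R A + v *\<^sub>R B)$i$j" using A1 B1 u by simp
  moreover have "\<forall>j. (\<Sum>i\<in>UNIV. (u *\<^sub>R A + v *\<^sub>R B)$i$j) = 1"
    using A1 B1 u by (simp add: sum.distrib sum_distrib_left[symmetric])
  moreover have "(u *\<^sub>R A + v *\<^sub>R B) *v g = g" using mv[of g] A1 B1 u
    by (metis scaleR_add_left scaleR_one)
  ultimately show "u *\<^sub>R A + v *\<^sub>R B \<in> TP g" unfolding TP_def by blast
qed

lemma orbit_convex: "convex (TP_orbit g p)"
  unfolding convex_def TP_orbit_def
proof (clarify)
  fix A B :: "real^'n^'n" and u v :: real
  assume A: "A \<in> TP g" and B: "B \<in> TP g" and u: "0 \<le> u" "0 \<le> v" "u + v = 1"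
  show "\<exists>T. u *\<^sub>R (A *v p) + v *\<^sub>R (B *v p) = T *v p \<and> T \<in> TP g"
    using TP_mix[OF A B u] by metis
qed

lemma TP_closed: "closed (TP g)"
proof -
  have e: "TP g = (\<Inter>i. \<Inter>j. {T. 0 \<le> T$i$j}) \<inter> (\<Inter>j. {T. (\<Sum>i\<in>UNIV. T$i$j) = 1}) \<inter> {T. T *v g = g}"
    unfolding TP_def by auto
  have c1: "closed {T::real^'n^'n. 0 \<le> T$i$j}" for i j
    by (intro closed_Collect_le continuous_intros)
  have c2: "closed {T::real^'n^'n. (\<Sum>i\<in>UNIV. T$i$j) = 1}" for j
    by (intro closed_Collect_eq continuous_intros)
  have c3: "closed {T::real^'n^'n. T *v g = g}"
    unfolding matrix_vector_mult_def by (intro closed_Collect_eq continuous_intros)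
  show ?thesis unfolding e using c1 c2 c3 by (intro closed_Int closed_INT) auto
qed

lemma TP_bounded: "bounded (TP g)"
  unfolding bounded_iff
proof (intro exI ballI)
  fix T assume T: "T \<in> TP g"
  have T1: "\<forall>i j. 0 \<le> T$i$j" "\<forall>j. (\<Sum>i\<in>UNIV. T$i$j) = 1" using T unfolding TP_def by auto
  have le1: "T$i$j \<le> 1" for i j
  proof -
    have "T$i$j \<le> (\<Sum>i\<in>UNIV. T$i$j)" by (rule member_le_sum) (use T1 in auto)
    then show ?thesis using T1 by simp
  qed
  have "norm T \<le> (\<Sum>i\<in>UNIV. norm (T$i))" by (simp add: norm_vec_def L2_set_le_sum)
  also have "\<dots> \<le> (\<Sum>i\<in>UNIV. \<Sum>j\<in>UNIV. \<bar>T$i$j\<bar>)" by (rule sum_mono) (rule norm_le_l1_cart)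
  also have "\<dots> \<le> (\<Sum>i\<in>(UNIV::'n set). \<Sum>j\<in>(UNIV::'n set). (1::real))"
  proof (rule sum_mono, rule sum_mono)
    fix i j
    show "\<bar>T$i$j\<bar> \<le> 1" using T1(1) le1[of i j] by (metis abs_of_nonneg)
  qed
  finally show "norm T \<le> real CARD('n) * real CARD('n)" by simp
qed

lemma orbit_closed: "closed (TP_orbit g p)"
proof -
  have e: "TP_orbit g p = (\<lambda>T. T *v p) ` TP g" unfolding TP_orbit_def by auto
  have "compact (TP g)" using TP_closed TP_bounded by (simp add: compact_eq_bounded_closed)
  moreover have "continuous_on (TP g) (\<lambda>T. T *v p)"
    unfolding matrix_vector_mult_def by (intro continuous_intros)
  ultimately have "compact (TP_orbit g p)" unfolding e by (blast intro: compact_continuous_image)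
  then show ?thesis by (rule compact_imp_closed)
qed

end


context gs
begin

lemma gne: "g$j \<noteq> 0" using gpos[of j] by simp

lemma star_in_orbit:
  assumes sig: "bij_betw \<sigma> {..<CARD('n)} UNIV"
  shows "(\<chi> i. lor p (G \<sigma> (Suc (pos \<sigma> i))) - lor p (G \<sigma> (pos \<sigma> i))) \<in> TP_orbit g p"
proof -
  define \<pi> where "\<pi> = tm_perm g p"
  have pib: "bij_betw \<pi> {..<CARD('n)} UNIV" unfolding \<pi>_def by (rule perm_bij)
  define a where "a i = G \<sigma> (pos \<sigma> i)" for i
  define b where "b i = G \<sigma> (Suc (pos \<sigma> i))" for i
  have a0: "0 \<le> a i" for i unfolding a_def by (rule G_nonneg)
  have ab: "a i \<le> b i" for i unfolding a_def b_def by (rule G_mono) simp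
  have b1: "b i \<le> 1" for i unfolding b_def using G_le1[OF sig, of "Suc (pos \<sigma> i)"] pos_facts(1)[OF sig, of i] by simp
  have bag: "b i - a i = g$i" for i unfolding a_def b_def using pos_facts(2)[OF sig, of i] by (simp add: PS_Suc)
  define T where "T = (\<chi> i j. (hh \<pi> j (b i) - hh \<pi> j (a i)) / g$j)"
  have Tij: "T$i$j = (hh \<pi> j (b i) - hh \<pi> j (a i)) / g$j" for i j by (simp add: T_def)
  have "T \<in> TP g"
    unfolding TP_def
  proof (intro CollectI conjI allI)
    fix i j
    show "0 \<le> T$i$j" unfolding Tij using hh_mono[OF ab, of \<pi> j] gpos[of j] by simp
  next
    fix j
    have "(\<Sum>i\<in>UNIV. hh \<pi> j (b i) - hh \<pi> j (a i)) = (\<Sum>k<CARD('n). hh \<pi> j (G \<sigma> (Suc k)) - hh \<pi> j (G \<sigma> k))"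
      unfolding a_def b_def by (rule sum_pos_reindex[OF sig])
    also have "\<dots> = hh \<pi> j (G \<sigma> CARD('n)) - hh \<pi> j (G \<sigma> 0)" by (rule sum_lessThan_telescope)
    also have "\<dots> = g$j" using G_all[OF sig] hh_1[OF pib] hh_0 by simp
    finally have s: "(\<Sum>i\<in>UNIV. hh \<pi> j (b i) - hh \<pi> j (a i)) = g$j" .
    show "(\<Sum>i\<in>UNIV. T$i$j) = 1" unfolding Tij sum_divide_distrib[symmetric] s using gpos[of j] by simp
  next
    show "T *v g = g"
    proof (subst vec_eq_iff, intro allI)
      fix i
      have "(T *v g)$i = (\<Sum>j\<in>UNIV. hh \<pi> j (b i) - hh \<pi> j (a i))"
        unfolding mv_nth Tij by (rule sum.cong[OF refl]) (use gpos in \<open>simp add: less_imp_neq[symmetric]\<close>)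
      also have "\<dots> = b i - a i"
        using hh_sum[OF pib, of "b i"] hh_sum[OF pib, of "a i"] a0 ab b1
        by (simp add: sum_subtractf) (smt (verit))
      finally show "(T *v g)$i = g$i" using bag by simp
    qed
  qed
  moreover have "T *v p = (\<chi> i. lor p (b i) - lor p (a i))"
  proof (subst vec_eq_iff, intro allI)
    fix i
    have "(T *v p)$i = (\<Sum>j\<in>UNIV. p$j / g$j * hh \<pi> j (b i) - p$j / g$j * hh \<pi> j (a i))"
      unfolding mv_nth Tij by (rule sum.cong[OF refl]) (simp add: field_simps gne)
    also have "\<dots> = lor p (b i) - lor p (a i)" unfolding lor_def \<pi>_def by (rule sum_subtractf)
    finally show "(T *v p)$i = (\<chi> i. lor p (b i) - lor p (a i))$i" by simp
  qed
  ultimately have "(\<chi> i. lor p (b i) - lor p (a i)) \<in> TP_orbit g p" unfolding TP_orbit_def by force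
  then show ?thesis unfolding a_def b_def .
qed

lemma inner_le:
  assumes sig: "bij_betw \<sigma> {..<CARD('n)} UNIV"
    and sorted: "\<And>i j. i \<le> j \<Longrightarrow> j < CARD('n) \<Longrightarrow> c$(\<sigma> j) \<le> c$(\<sigma> i)"
    and q: "is_state q" and ps: "(\<Sum>j\<in>UNIV. p$j) = 1" and Fq: "\<And>t. F q t \<le> F p t"
  shows "inner c q \<le> inner c (\<chi> i. lor p (G \<sigma> (Suc (pos \<sigma> i))) - lor p (G \<sigma> (pos \<sigma> i)))"
proof -
  define L where "L k = lor p (G \<sigma> k)" for k
  define A where "A k = PS \<sigma> (($) q) k" for k
  have e1: "inner c q = (\<Sum>k<CARD('n). c$(\<sigma> k) * (A (Suc k) - A k))"
  proof -
    have "inner c q = (\<Sum>i\<in>UNIV. c$i * q$i)" by (simp add: inner_vec_def)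
    also have "\<dots> = (\<Sum>k<CARD('n). c$(\<sigma> k) * q$(\<sigma> k))" by (rule sum_reindex_pos[OF sig])
    finally show ?thesis by (simp add: A_def PS_Suc)
  qed
  have e2: "inner c (\<chi> i. lor p (G \<sigma> (Suc (pos \<sigma> i))) - lor p (G \<sigma> (pos \<sigma> i)))
      = (\<Sum>k<CARD('n). c$(\<sigma> k) * (L (Suc k) - L k))"
  proof -
    have "inner c (\<chi> i. lor p (G \<sigma> (Suc (pos \<sigma> i))) - lor p (G \<sigma> (pos \<sigma> i)))
        = (\<Sum>i\<in>UNIV. c$i * (L (Suc (pos \<sigma> i)) - L (pos \<sigma> i)))" by (simp add: inner_vec_def L_def)
    also have "\<dots> = (\<Sum>k<CARD('n). c$(\<sigma> k) * (L (Suc (pos \<sigma> (\<sigma> k))) - L (pos \<sigma> (\<sigma> k))))"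
      by (rule sum_reindex_pos[OF sig])
    also have "\<dots> = (\<Sum>k<CARD('n). c$(\<sigma> k) * (L (Suc k) - L k))"
      by (rule sum.cong[OF refl]) (use pos_facts(3)[OF sig] in simp)
    finally show ?thesis .
  qed
  define D where "D k = L k - A k" for k
  have "0 \<le> (\<Sum>k<CARD('n). c$(\<sigma> k) * (D (Suc k) - D k))"
  proof (rule abel_nonneg)
    fix k assume "Suc k < CARD('n)" then show "c$(\<sigma> (Suc k)) \<le> c$(\<sigma> k)" by (intro sorted) auto
  next
    fix k assume k: "k \<le> CARD('n)"
    have x: "0 \<le> G \<sigma> k" "G \<sigma> k \<le> 1" using G_nonneg G_le1[OF sig k] by auto
    obtain t where t: "lor p (G \<sigma> k) = F p t + t * G \<sigma> k" using lor_eq_F[OF x] by blast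
    have "A k - t * G \<sigma> k \<le> F q t" unfolding A_def by (rule knap[OF sig k])
    then show "0 \<le> D k" unfolding D_def L_def using t Fq[of t] by simp
  next
    show "D 0 = 0" unfolding D_def L_def A_def by (simp add: lor_0)
  next
    have "G \<sigma> CARD('n) = 1" by (rule G_all[OF sig])
    moreover have "A CARD('n) = 1" unfolding A_def PS_all[OF sig] using q unfolding is_state_def by simp
    ultimately show "D CARD('n) = 0" unfolding D_def L_def using lor_1 ps by simp
  qed
  also have "(\<Sum>k<CARD('n). c$(\<sigma> k) * (D (Suc k) - D k)) =
      (\<Sum>k<CARD('n). c$(\<sigma> k) * (L (Suc k) - L k)) - (\<Sum>k<CARD('n). c$(\<sigma> k) * (A (Suc k) - A k))"
    unfolding D_def by (simp add: sum_subtractf[symmetric] algebra_simps)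
  finally show ?thesis using e1 e2 by simp
qed

lemma orbit_complete:
  assumes p: "is_state p" and q: "is_state q" and Fq: "\<And>t. F q t \<le> F p t"
  shows "q \<in> TP_orbit g p"
proof (rule ccontr)
  assume nq: "q \<notin> TP_orbit g p"
  obtain a b where ab: "inner a q < b" "\<forall>x\<in>TP_orbit g p. b < inner a x"
    using separating_hyperplane_closed_point[OF orbit_convex orbit_closed nq] by blast
  obtain \<sigma> where sig: "bij_betw \<sigma> {..<CARD('n)} UNIV"
    and s: "\<forall>i j. i \<le> j \<and> j < CARD('n) \<longrightarrow> (-a)$(\<sigma> j) \<le> (-a)$(\<sigma> i)"
    using sort_exists[of "\<lambda>i. (-a)$i"] by blast
  have ps: "(\<Sum>j\<in>UNIV. p$j) = 1" using p unfolding is_state_def by simp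
  have "inner (-a) q \<le> inner (-a) (\<chi> i. lor p (G \<sigma> (Suc (pos \<sigma> i))) - lor p (G \<sigma> (pos \<sigma> i)))"
    by (rule inner_le[OF sig _ q ps Fq]) (use s in blast)
  moreover have "b < inner a (\<chi> i. lor p (G \<sigma> (Suc (pos \<sigma> i))) - lor p (G \<sigma> (pos \<sigma> i)))"
    using ab(2) star_in_orbit[OF sig] by blast
  ultimately show False using ab(1) by simp
qed

end


context gs
begin

lemma interior_sub:
  assumes p: "is_state p" and d2: "2 \<le> CARD('n)"
    and r: "r \<in> (top_of_set hyperplane1) interior_of (TP_orbit g p)"
  shows "is_state r \<and> (\<forall>(x, y) \<in> elbows g r. y < tm_curve g p x)"
proof -
  obtain U where U: "openin (top_of_set hyperplane1) U" "r \<in> U" "U \<subseteq> TP_orbit g p"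
    using r unfolding interior_of_def by blast
  obtain V where V: "open V" "U = hyperplane1 \<inter> V" using U(1) unfolding openin_open by blast
  obtain e where e: "0 < e" "ball r e \<subseteq> V" using V U(2) open_contains_ball by blast
  have rorb: "r \<in> TP_orbit g p" using U by blast
  have rs: "is_state r" using rorb orbit_state[OF p] unfolding TP_orbit_def by auto
  have orbF: "F s t \<le> F p t" if "s \<in> TP_orbit g p" for s t using that F_orbit unfolding TP_orbit_def by auto
  have "\<forall>(x, y) \<in> elbows g r. y < tm_curve g p x"
  proof (clarify)
    fix x y assume "(x, y) \<in> elbows g r"
    then obtain k where k: "k \<le> CARD('n) - 2" "x = tmX g r (Suc k)" "y = tmY g r (Suc k)"
      unfolding elbows_def by auto
    define \<pi> where "\<pi> = tm_perm g r"
    have bij: "bij_betw \<pi> {..<CARD('n)} UNIV" unfolding \<pi>_def by (rule perm_bij)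
    have inj: "inj_on \<pi> {..<CARD('n)}" using bij by (rule bij_betw_imp_inj_on)
    define m where "m = Suc k"
    have m: "0 < m" "m < CARD('n)" "m \<noteq> 0" using k(1) d2 unfolding m_def by auto
    have xy: "x = G \<pi> m" "y = PS \<pi> (($) r) m" using k unfolding tmX_eq tmY_eq \<pi>_def m_def by auto
    have x01: "0 \<le> x" "x \<le> 1" unfolding xy using G_nonneg G_le1[OF bij, of m] m by auto
    show "y < tm_curve g p x"
    proof (rule ccontr)
      assume "\<not> y < tm_curve g p x"
      then have yge: "lor p x \<le> y" using curve_eq[OF x01] by simp
      define a where "a = \<pi> 0"
      define b where "b = \<pi> (CARD('n) - 1)"
      have ab: "a \<noteq> b"
      proof
        assume "a = b"
        then have "(0::nat) = CARD('n) - 1" unfolding a_def b_def using inj_onD[OF inj] d2 by fastforce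
        then show False using d2 by simp
      qed
      define \<epsilon> where "\<epsilon> = e / 4"
      have \<epsilon>: "0 < \<epsilon>" using e unfolding \<epsilon>_def by simp
      define pt where "pt i = (if i = a then \<epsilon> else 0) + (if i = b then -\<epsilon> else 0)" for i
      define r' where "r' = (\<chi> i. r$i + pt i)"
      have r'i: "r'$i = r$i + pt i" for i unfolding r'_def by simp
      have "norm (r - r') \<le> (\<Sum>i\<in>UNIV. \<bar>(r - r')$i\<bar>)" by (rule norm_le_l1_cart)
      also have "\<dots> = (\<Sum>i\<in>UNIV. (if i = a then \<epsilon> else 0) + (if i = b then \<epsilon> else 0))"
        by (rule sum.cong[OF refl]) (use ab \<epsilon> in \<open>auto simp: r'i pt_def\<close>)
      also have "\<dots> = 2 * \<epsilon>" by (simp add: sum.distrib)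
      finally have "dist r r' < e" using e unfolding \<epsilon>_def dist_norm by simp
      then have "r' \<in> V" using e by auto
      moreover have "r' \<in> hyperplane1"
      proof -
        have "(\<Sum>i\<in>UNIV. r'$i) = (\<Sum>i\<in>UNIV. r$i) + (\<Sum>i\<in>UNIV. pt i)" by (simp add: r'i sum.distrib)
        also have "(\<Sum>i\<in>UNIV. pt i) = 0" by (simp add: pt_def sum.distrib)
        finally show ?thesis using rs unfolding hyperplane1_def is_state_def by simp
      qed
      ultimately have r'orb: "r' \<in> TP_orbit g p" using U V by blast
      have "PS \<pi> (($) r') m = PS \<pi> (($) r) m + (\<Sum>i<m. pt (\<pi> i))" by (simp add: PS_def r'i sum.distrib)
      also have "(\<Sum>i<m. pt (\<pi> i)) = (\<Sum>i<m. (if i = 0 then \<epsilon> else 0))"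
      proof (rule sum.cong[OF refl])
        fix i assume i: "i \<in> {..<m}"
        have "\<pi> i = a \<longleftrightarrow> i = 0" unfolding a_def using inj_on_eq_iff[OF inj, of i 0] i m by auto
        moreover have "\<pi> i \<noteq> b" unfolding b_def using inj_on_eq_iff[OF inj, of i "CARD('n) - 1"] i m by auto
        ultimately show "pt (\<pi> i) = (if i = 0 then \<epsilon> else 0)" unfolding pt_def by auto
      qed
      also have "\<dots> = \<epsilon>" using m by simp
      finally have ps': "PS \<pi> (($) r') m = y + \<epsilon>" using xy by simp
      obtain t where t: "lor p x = F p t + t * x" using lor_eq_F[OF x01] by blast
      have "PS \<pi> (($) r') m - t * G \<pi> m \<le> F r' t" by (rule knap[OF bij]) (use m in simp)
      then show False using orbF[OF r'orb, of t] t ps' yge \<epsilon> xy by simp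
    qed
  qed
  then show ?thesis using rs by simp
qed

end


context gs
begin

lemma interior_sup:
  assumes p: "is_state p" and d2: "2 \<le> CARD('n)"
    and rs: "is_state r" and el: "\<forall>(x, y) \<in> elbows g r. y < tm_curve g p x"
  shows "r \<in> (top_of_set hyperplane1) interior_of (TP_orbit g p)"
proof -
  define \<pi> where "\<pi> = tm_perm g r"
  have bij: "bij_betw \<pi> {..<CARD('n)} UNIV" unfolding \<pi>_def by (rule perm_bij)
  define \<rho> where "\<rho> = tm_perm g p"
  define N where "N = CARD('n) - 1"
  have N: "N < CARD('n)" "Suc N = CARD('n)" "0 < N" using d2 unfolding N_def by auto
  define Mr where "Mr = r$(\<pi> 0) / g$(\<pi> 0)"
  define mr where "mr = r$(\<pi> N) / g$(\<pi> N)"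
  define Mp where "Mp = p$(\<rho> 0) / g$(\<rho> 0)"
  define mp where "mp = p$(\<rho> N) / g$(\<rho> N)"
  have r0: "0 \<le> r$i" and rsum: "(\<Sum>i\<in>UNIV. r$i) = 1" for i using rs unfolding is_state_def by auto
  have p0: "0 \<le> p$i" and psum: "(\<Sum>i\<in>UNIV. p$i) = 1" for i using p unfolding is_state_def by auto
  have rle: "r$i \<le> Mr * g$i" for i
  proof -
    have "r$(\<pi> (pos \<pi> i)) / g$(\<pi> (pos \<pi> i)) \<le> Mr" unfolding Mr_def \<pi>_def
      using perm_sorted[of 0 "pos (tm_perm g r) i" r] pos_facts(1)[OF bij, of i] \<pi>_def by simp
    then show ?thesis using pos_facts(2)[OF bij, of i] gpos[of i] by (simp add: divide_le_eq)
  qed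
  have rge: "mr * g$i \<le> r$i" for i
  proof -
    have "pos \<pi> i \<le> N" using pos_facts(1)[OF bij, of i] unfolding N_def by simp
    then have "mr \<le> r$(\<pi> (pos \<pi> i)) / g$(\<pi> (pos \<pi> i))" unfolding mr_def \<pi>_def
      using perm_sorted[of "pos (tm_perm g r) i" N r] N \<pi>_def by simp
    then show ?thesis using pos_facts(2)[OF bij, of i] gpos[of i] by (simp add: le_divide_eq)
  qed
  have elb: "PS \<pi> (($) r) m < lor p (G \<pi> m)" if m: "0 < m" "m < CARD('n)" for m
  proof -
    have x01: "0 \<le> G \<pi> m" "G \<pi> m \<le> 1" using G_nonneg G_le1[OF bij, of m] m by auto
    have "(tmX g r (Suc (m - 1)), tmY g r (Suc (m - 1))) \<in> elbows g r"
      unfolding elbows_def using m by (intro CollectI exI[of _ "m - 1"]) auto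
    then have "tmY g r (Suc (m - 1)) < tm_curve g p (tmX g r (Suc (m - 1)))" using el by auto
    then show ?thesis using m curve_eq[OF x01] unfolding tmX_eq tmY_eq \<pi>_def by simp
  qed
  have MrMp: "Mr < Mp"
  proof -
    have x01: "0 \<le> G \<pi> 1" "G \<pi> 1 \<le> 1" using G_nonneg G_le1[OF bij, of 1] d2 by auto
    have "r$(\<pi> 0) < lor p (g$(\<pi> 0))" using elb[of 1] d2 by (simp add: PS_def)
    also have "\<dots> \<le> Mp * g$(\<pi> 0)" using lor_le_max[of "g$(\<pi> 0)" p] x01 unfolding Mp_def \<rho>_def
      by (simp add: PS_def)
    finally show ?thesis unfolding Mr_def using gpos[of "\<pi> 0"] by (simp add: divide_less_eq)
  qed
  have mpmr: "mp < mr"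
  proof -
    have GN: "G \<pi> N = 1 - g$(\<pi> N)" using G_all[OF bij] N by (metis PS_Suc add_diff_cancel_right')
    have PN: "PS \<pi> (($) r) N = 1 - r$(\<pi> N)" using PS_all[OF bij, of "($) r"] rsum N
      by (metis PS_Suc add_diff_cancel_right')
    have x01: "0 \<le> G \<pi> N" "G \<pi> N \<le> 1" using G_nonneg G_le1[OF bij, of N] N by auto
    have "1 - r$(\<pi> N) < lor p (G \<pi> N)" using elb[of N] N PN by simp
    also have "\<dots> \<le> 1 - mp * g$(\<pi> N)"
      using lor_ge_min[OF x01 psum] GN unfolding mp_def \<rho>_def N_def by simp
    finally show ?thesis unfolding mr_def using gpos[of "\<pi> N"] by (simp add: less_divide_eq)
  qed
  have mrMr: "mr \<le> Mr" unfolding mr_def Mr_def \<pi>_def using perm_sorted[of 0 N r] N by simp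
  have mp0: "0 \<le> mp" unfolding mp_def using p0 gpos[of "\<rho> N"] by simp
  define t0 where "t0 = (Mr + Mp) / 2"
  define t1 where "t1 = (mp + mr) / 2"
  have t01: "t1 \<le> t0" "Mr < t0" "t0 < Mp" "mp < t1" "t1 < mr" "0 < t1"
    using MrMp mpmr mrMr mp0 unfolding t0_def t1_def by auto
  have gap: "F r t < F p t" if t: "t1 \<le> t" "t \<le> t0" for t
  proof -
    define k where "k = (LEAST k. CARD('n) \<le> k \<or> r$(\<pi> k) / g$(\<pi> k) \<le> t)"
    have kc: "k \<le> CARD('n)" unfolding k_def by (rule Least_le) simp
    have hi: "t \<le> r$(\<pi> i) / g$(\<pi> i)" if "i < k" for i
      using not_less_Least[of i "\<lambda>k. CARD('n) \<le> k \<or> r$(\<pi> k) / g$(\<pi> k) \<le> t"] that unfolding k_def[symmetric]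
      by auto
    have lo: "r$(\<pi> i) / g$(\<pi> i) \<le> t" if "k \<le> i" "i < CARD('n)" for i
    proof -
      have "CARD('n) \<le> k \<or> r$(\<pi> k) / g$(\<pi> k) \<le> t"
        unfolding k_def by (rule LeastI[of _ "CARD('n)"]) simp
      then have "r$(\<pi> k) / g$(\<pi> k) \<le> t" using that by auto
      moreover have "r$(\<pi> i) / g$(\<pi> i) \<le> r$(\<pi> k) / g$(\<pi> k)" using perm_sorted[of k i r] that unfolding \<pi>_def by simp
      ultimately show ?thesis by simp
    qed
    have Fr: "F r t = PS \<pi> (($) r) k - t * G \<pi> k" by (rule prefix[OF bij kc hi lo])
    consider "k = 0" | "k = CARD('n)" | "0 < k" "k < CARD('n)" using kc by linarith
    then show ?thesis
    proof cases
      case 1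
      have m1: "t * g$(\<rho> 0) \<le> t0 * g$(\<rho> 0)" using t gpos[of "\<rho> 0"] by (intro mult_right_mono) auto
      have m2: "t0 * g$(\<rho> 0) < p$(\<rho> 0)" using t01 gpos[of "\<rho> 0"] unfolding Mp_def by (simp add: less_divide_eq)
      have "0 < p$(\<rho> 0) - t * g$(\<rho> 0)" using m1 m2 by simp
      also have "\<dots> \<le> max 0 (p$(\<rho> 0) - t * g$(\<rho> 0))" by simp
      also have "\<dots> \<le> F p t" unfolding F_def by (rule member_le_sum) auto
      finally show ?thesis using Fr 1 by simp
    next
      case 2
      have Fr2: "F r t = 1 - t" using Fr 2 PS_all[OF bij, of "($) r"] rsum G_all[OF bij] by simp
      have m1: "t1 * g$(\<rho> N) \<le> t * g$(\<rho> N)" using t gpos[of "\<rho> N"] by (intro mult_right_mono) auto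
      have m2: "p$(\<rho> N) < t1 * g$(\<rho> N)" using t01 gpos[of "\<rho> N"] unfolding mp_def by (simp add: divide_less_eq)
      have u: "p$(\<rho> N) - t * g$(\<rho> N) < 0" using m1 m2 by simp
      have "1 - t = (\<Sum>i\<in>UNIV. p$i - t * g$i)" using psum gsum by (simp add: sum_subtractf sum_distrib_left[symmetric])
      also have "\<dots> < (\<Sum>i\<in>UNIV. max 0 (p$i - t * g$i))"
      proof (rule sum_strict_mono_ex1)
        show "\<exists>a\<in>UNIV. p$a - t * g$a < max 0 (p$a - t * g$a)"
          using u by (intro bexI[of _ "\<rho> N"]) auto
      qed auto
      finally show ?thesis using Fr2 unfolding F_def by simp
    next
      case 3
      have x01: "0 \<le> G \<pi> k" "G \<pi> k \<le> 1" using G_nonneg G_le1[OF bij, of k] 3 by auto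
      have "F r t < lor p (G \<pi> k) - t * G \<pi> k" using Fr elb[OF 3] by simp
      also have "\<dots> \<le> F p t" by (rule lor_le_F[OF x01])
      finally show ?thesis .
    qed
  qed
  obtain tm where tm: "tm \<in> {t1..t0}" "\<forall>t\<in>{t1..t0}. F p tm - F r tm \<le> F p t - F r t"
  proof -
    have "continuous_on {t1..t0} (\<lambda>t. F p t - F r t)" by (intro continuous_on_diff F_cont)
    then have "\<exists>x\<in>{t1..t0}. \<forall>y\<in>{t1..t0}. F p x - F r x \<le> F p y - F r y"
      using continuous_attains_inf[of "{t1..t0}" "\<lambda>t. F p t - F r t"] t01 by auto
    then show ?thesis using that by blast
  qed
  define \<delta> where "\<delta> = F p tm - F r tm"
  have \<delta>: "0 < \<delta>" using gap[of tm] tm(1) unfolding \<delta>_def by auto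
  have \<delta>le: "\<delta> \<le> F p t - F r t" if "t1 \<le> t" "t \<le> t0" for t using tm(2) that unfolding \<delta>_def by auto
  define gm where "gm = Min (range (($) g))"
  have gm: "0 < gm" "gm \<le> g$i" for i
  proof -
    have "gm \<in> range (($) g)" unfolding gm_def by (rule Min_in) auto
    then show "0 < gm" using gpos by auto
    show "gm \<le> g$i" unfolding gm_def by (rule Min_le) auto
  qed
  define \<epsilon> where "\<epsilon> = min (\<delta> / (2 * CARD('n))) (min ((t0 - Mr) * gm) ((mr - t1) * gm))"
  have \<epsilon>: "0 < \<epsilon>" "\<epsilon> \<le> \<delta> / (2 * CARD('n))" "\<epsilon> \<le> (t0 - Mr) * gm" "\<epsilon> \<le> (mr - t1) * gm"
    using \<delta> gm(1) t01 unfolding \<epsilon>_def by auto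
  have sub: "hyperplane1 \<inter> ball r \<epsilon> \<subseteq> TP_orbit g p"
  proof
    fix r' assume r': "r' \<in> hyperplane1 \<inter> ball r \<epsilon>"
    have r'sum: "(\<Sum>i\<in>UNIV. r'$i) = 1" using r' unfolding hyperplane1_def by simp
    have cl: "\<bar>r'$i - r$i\<bar> < \<epsilon>" for i
      using component_le_norm_cart[of "r' - r" i] r' by (simp add: dist_norm norm_minus_commute)
    have up: "r'$i < t0 * g$i" for i
    proof -
      have "(t0 - Mr) * gm \<le> (t0 - Mr) * g$i" using gm t01 by (intro mult_left_mono) auto
      then show ?thesis using cl[of i] rle[of i] \<epsilon> by (simp add: algebra_simps)
    qed
    have lw: "t1 * g$i < r'$i" for i
    proof -
      have "(mr - t1) * gm \<le> (mr - t1) * g$i" using gm t01 by (intro mult_left_mono) auto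
      then show ?thesis using cl[of i] rge[of i] \<epsilon> by (simp add: algebra_simps)
    qed
    have r'st: "is_state r'" unfolding is_state_def
    proof (intro conjI allI r'sum)
      fix i show "0 \<le> r'$i" using lw[of i] t01 gpos[of i] by (smt (verit) mult_pos_pos)
    qed
    have "F r' t \<le> F p t" for t
    proof -
      consider "t0 \<le> t" | "t \<le> t1" | "t1 \<le> t" "t \<le> t0" by linarith
      then show ?thesis
      proof cases
        case 1
        have "F r' t = 0" unfolding F_def
        proof (rule sum.neutral, intro ballI)
          fix i
          have "t0 * g$i \<le> t * g$i" using 1 gpos[of i] by simp
          then show "max 0 (r'$i - t * g$i) = 0" using up[of i] by simp
        qed
        then show ?thesis using F_nonneg by simp
      next
        case 2
        have "F r' t = (\<Sum>i\<in>UNIV. r'$i - t * g$i)" unfolding F_def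
        proof (rule sum.cong[OF refl])
          fix i
          have "t * g$i \<le> t1 * g$i" using 2 gpos[of i] by simp
          then show "max 0 (r'$i - t * g$i) = r'$i - t * g$i" using lw[of i] by simp
        qed
        also have "\<dots> = 1 - t" using r'sum gsum by (simp add: sum_subtractf sum_distrib_left[symmetric])
        finally show ?thesis using F_ge[OF psum, of t] by simp
      next
        case 3
        have "(\<Sum>i\<in>UNIV. \<bar>r'$i - r$i\<bar>) \<le> (\<Sum>i\<in>(UNIV::'n set). \<epsilon>)"
          by (rule sum_mono) (use cl in \<open>simp add: less_imp_le\<close>)
        also have "\<dots> = CARD('n) * \<epsilon>" by simp
        also have "\<dots> \<le> CARD('n) * (\<delta> / (2 * CARD('n)))" using \<epsilon> by (intro mult_left_mono) auto
        also have "\<dots> = \<delta> / 2" by simp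
        finally have "(\<Sum>i\<in>UNIV. \<bar>r'$i - r$i\<bar>) \<le> \<delta> / 2" .
        then show ?thesis using F_lip[of r' t r] \<delta>le[OF 3] \<delta> by simp
      qed
    qed
    then show "r' \<in> TP_orbit g p" by (rule orbit_complete[OF p r'st])
  qed
  have "openin (top_of_set hyperplane1) (hyperplane1 \<inter> ball r \<epsilon>)"
    unfolding openin_open by blast
  moreover have "r \<in> hyperplane1 \<inter> ball r \<epsilon>" using rsum \<epsilon> unfolding hyperplane1_def by simp
  ultimately show ?thesis unfolding interior_of_def using sub by blast
qed

end

lemma gibbs_gs:
  fixes beta :: real and E :: "'n::finite \<Rightarrow> real"
  shows "gs (gibbs beta E)"
proof
  have S: "0 < (\<Sum>j\<in>UNIV. exp (- beta * E j))" by (rule sum_pos) auto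
  show "0 < gibbs beta E $ i" for i unfolding gibbs_def using S by simp
  show "(\<Sum>i\<in>UNIV. gibbs beta E $ i) = 1" unfolding gibbs_def using S
    by (simp add: sum_divide_distrib[symmetric])
qed

theorem mainTheorem5:
  fixes beta :: real and E :: "'n::finite \<Rightarrow> real" and p :: "real^'n"
  assumes "CARD('n) \<ge> 2"
    and "0 < beta"
    and "\<exists>i0. E i0 = 0"
    and "inj E"
    and "is_state p"
  shows "(top_of_set hyperplane1) interior_of (TP_orbit (gibbs beta E) p) =
         {r. is_state r \<and>
             (\<forall>(x, y) \<in> elbows (gibbs beta E) r. y < tm_curve (gibbs beta E) p x)}"
proof -
  interpret gs "gibbs beta E" by (rule gibbs_gs)
  show ?thesis
  proof
    show "(top_of_set hyperplane1) interior_of (TP_orbit (gibbs beta E) p) \<subseteq>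
         {r. is_state r \<and> (\<forall>(x, y) \<in> elbows (gibbs beta E) r. y < tm_curve (gibbs beta E) p x)}"
      using interior_sub[OF assms(5) assms(1)] by blast
    show "{r. is_state r \<and> (\<forall>(x, y) \<in> elbows (gibbs beta E) r. y < tm_curve (gibbs beta E) p x)}
        \<subseteq> (top_of_set hyperplane1) interior_of (TP_orbit (gibbs beta E) p)"
      using interior_sup[OF assms(5) assms(1)] by blast
  qed
qed

end
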